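(* Let $m \ge 5$ be odd and $n = 3^m-1$. Then the ternary cyclic code $\mathcal{C}_{(1,2,m)}$ has parameters $[n,k,d]$ with $d \ge \frac{3^{(m-1)/2}+13}{2}$ if $m \equiv 1 \pmod 4$ and $d \ge \frac{3^{(m-1)/2}+11}{2}$ if $m \equiv 3 \pmod 4$, and $k = \frac{n}{2}$ if $m \equiv 1 \pmod 4$ and $k = \frac{n+2}{2}$ if $m \equiv 3 \pmod 4$.
   Context: Let $m \ge 2$ be an integer, $n = 3^m-1$, and let $\alpha$ be a primitive element of $\mathbb{F}_{3^m}$. For an integer $0 \le j \le n-1$ with $3$-adic expansion $j = \sum_{t=0}^{m-1} j_t 3^t$, $j_t \in \{0,1,2\}$, let $w_3(j) = \sum_{t=0}^{m-1} j_t$. For distinct $i_1, i_2 \in \{0,1,2,3\}$ let $T_{(i_1,i_2,m)} = \{1 \le j \le n-1 : w_3(j) \equiv i_1 \text{ or } i_2 \pmod 4\}$ and $g_{(i_1,i_2,m)}(x) = \prod_{j \in T_{(i_1,i_2,m)}} (x - \alpha^j) \in \mathbb{F}_3[x]$. $\mathcal{C}_{(i_1,i_2,m)}$ denotes the ternary cyclic code of length $n$ with generator polynomial $g_{(i_1,i_2,m)}(x)$. Parameters $[n,k,d]$ mean length, dimension over $\mathbb{F}_3$, and minimum Hamming distance. *)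

theory Defs
  imports "HOL-Computational_Algebra.Polynomial"
begin

fun w3 :: "nat \<Rightarrow> nat" where
  "w3 j = (if j = 0 then 0 else j mod 3 + w3 (j div 3))"

definition primitive_elem :: "'a::{field,finite} \<Rightarrow> bool" where
  "primitive_elem \<alpha> \<longleftrightarrow> \<alpha> \<noteq> 0 \<and> (\<forall>x. x \<noteq> 0 \<longrightarrow> (\<exists>i::nat. x = \<alpha> ^ i))"

definition Tset :: "nat \<Rightarrow> nat \<Rightarrow> nat \<Rightarrow> nat set" where
  "Tset i1 i2 m = {j. 1 \<le> j \<and> j \<le> 3^m - 2 \<and> (w3 j mod 4 = i1 \<or> w3 j mod 4 = i2)}"

definition gpoly :: "'a::{field,finite} \<Rightarrow> nat \<Rightarrow> nat \<Rightarrow> nat \<Rightarrow> 'a poly" where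
  "gpoly \<alpha> i1 i2 m = (\<Prod>j\<in>Tset i1 i2 m. [:- (\<alpha> ^ j), 1:])"

definition prime_subfield :: "'a::{field,finite} set" where
  "prime_subfield = range (of_nat :: nat \<Rightarrow> 'a)"

text \<open>The ternary cyclic code of length n = 3^m - 1 with generator polynomial g:
  codewords are identified with polynomials c(x) = sum c_i x^i over F_3 of degree < n,
  and the code is the ideal generated by g in F_3[x]/(x^n - 1), i.e. the multiples of g
  of degree < n (g divides x^n - 1).\<close>
definition tcode :: "'a::{field,finite} \<Rightarrow> nat \<Rightarrow> nat \<Rightarrow> nat \<Rightarrow> 'a poly set" where
  "tcode \<alpha> i1 i2 m = {c. (\<forall>i. coeff c i \<in> prime_subfield) \<and> degree c < 3^m - 1
                           \<and> gpoly \<alpha> i1 i2 m dvd c}"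

definition hweight :: "'a::zero poly \<Rightarrow> nat" where
  "hweight c = card {i. coeff c i \<noteq> 0}"

text \<open>Minimum Hamming distance of a linear code = minimum weight of a nonzero codeword.\<close>
definition min_dist :: "'a::zero poly set \<Rightarrow> nat" where
  "min_dist C = Min {hweight c | c. c \<in> C \<and> c \<noteq> 0}"

definition dim3 :: "'a set \<Rightarrow> nat" where
  "dim3 C = (THE k. card C = 3 ^ k)"

end

theory Submission
  imports Defs "HOL-Number_Theory.Residues"
begin

declare w3.simps[simp del]

lemma w3_0[simp]: "w3 0 = 0" by (subst w3.simps) simp

lemma w3_dm: "w3 z = z mod 3 + w3 (z div 3)"
  by (cases "z = 0") (simp, subst w3.simps, simp)

lemma w3_step: "d < 3 \<Longrightarrow> w3 (3*q + d) = d + w3 q"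
  by (subst w3_dm) simp

lemma w3_split: "b < 3^k \<Longrightarrow> w3 (a * 3^k + b) = w3 a + w3 b"
proof (induction k arbitrary: b)
  case 0 then show ?case by simp
next
  case (Suc k)
  have bd: "b div 3 < 3^k" using Suc.prems by simp
  have e: "a * 3^Suc k + b = 3 * (a*3^k + b div 3) + b mod 3" by simp
  have "w3 (a * 3^Suc k + b) = b mod 3 + w3 (a*3^k + b div 3)"
    unfolding e by (rule w3_step) simp
  also have "\<dots> = b mod 3 + w3 a + w3 (b div 3)" using Suc.IH[OF bd] by simp
  also have "w3 b = b mod 3 + w3 (b div 3)" by (rule w3_dm)
  ultimately show ?case by simp
qed

lemma w3_compl: "z < 3^k \<Longrightarrow> w3 (3^k - 1 - z) + w3 z = 2*k"
proof (induction k arbitrary: z)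
  case 0 then show ?case by simp
next
  case (Suc k)
  define q where "q = z div 3"
  define d where "d = z mod 3"
  have z: "z = 3*q + d" and d: "d < 3" by (simp_all add: q_def d_def)
  have q: "q < 3^k" using Suc.prems by (simp add: q_def)
  have e: "3^Suc k - 1 - z = 3*(3^k - 1 - q) + (2 - d)"
    using z d q by (simp add: algebra_simps)
  have "w3 (3^Suc k - 1 - z) = (2 - d) + w3 (3^k - 1 - q)"
    unfolding e by (rule w3_step) (use d in simp)
  moreover have "w3 z = d + w3 q" using z d w3_step by simp
  ultimately show ?case using Suc.IH[OF q] d by simp
qed

lemma w3_parity: "w3 z mod 2 = z mod 2"
proof (induction z rule: less_induct)
  case (less z)
  show ?case
  proof (cases "z = 0")
    case True then show ?thesis by simp
  next
    case False
    define q where "q = z div 3"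
    define d where "d = z mod 3"
    have z: "z = 3*q + d" and d: "d < 3" by (simp_all add: q_def d_def)
    have IH: "w3 q mod 2 = q mod 2" using False unfolding q_def by (intro less.IH) simp
    have "w3 z = d + w3 q" using z d w3_step by simp
    moreover have "\<And>W Q. W = d + Q \<Longrightarrow> Q mod 2 = q mod 2 \<Longrightarrow> z = 3*q+d \<Longrightarrow> W mod 2 = z mod 2"
      by presburger
    ultimately show ?thesis using IH z by blast

  qed
qed

lemma w3_small: "w3 1 = 1" "w3 2 = 2" "w3 3 = 1" "w3 4 = 2"
proof -
  have a: "w3 1 = 1 mod 3 + w3 (1 div 3)" by (rule w3_dm)
  have b: "w3 2 = 2 mod 3 + w3 (2 div 3)" by (rule w3_dm)
  have c: "w3 3 = 3 mod 3 + w3 (3 div 3)" by (rule w3_dm)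
  have d: "w3 4 = 4 mod 3 + w3 (4 div 3)" by (rule w3_dm)
  show "w3 1 = 1" "w3 2 = 2" "w3 3 = 1" "w3 4 = 2" using a b c d by simp_all
qed


lemma char3:
  assumes card: "card (UNIV :: 'a::{field,finite} set) = 3^m" and m: "m > 0"
  shows "(3::'a) = 0"
proof -
  have d: "CHAR('a) dvd 3^m" using CHAR_dvd_CARD[where 'a='a] card by simp
  have pos: "CHAR('a) > 0" by (rule finite_imp_CHAR_pos) simp
  have pr: "prime CHAR('a)" using prime_CHAR_semidom[OF pos] .
  have "CHAR('a) dvd 3" using prime_dvd_power[OF pr d] .
  moreover have "CHAR('a) \<le> 3" using \<open>CHAR('a) dvd 3\<close> by (rule dvd_imp_le) simp
  moreover have "CHAR('a) \<ge> 2" using pr by (rule prime_ge_2_nat)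
  ultimately have "CHAR('a) = 3" by (cases "CHAR('a) = 2") auto
  then have "of_nat 3 = (0::'a)" by (metis of_nat_CHAR)
  then show ?thesis by simp
qed

lemma fermat_field:
  fixes x :: "'a::{field,finite}"
  assumes x: "x \<noteq> 0"
  shows "x ^ (card (UNIV :: 'a set) - 1) = 1"
proof -
  define U where "U = (UNIV :: 'a set) - {0}"
  have fin: "finite U" by (simp add: U_def)
  have cU: "card U = card (UNIV :: 'a set) - 1" by (simp add: U_def card_Diff_singleton)
  have bij: "bij_betw (\<lambda>y. x*y) U U"
    unfolding bij_betw_def
  proof
    show "inj_on ((*) x) U" using x by (auto intro: inj_onI)
    show "(*) x ` U = U"
    proof
      show "(*) x ` U \<subseteq> U" using x by (auto simp: U_def)
      show "U \<subseteq> (*) x ` U"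
      proof
        fix y assume "y \<in> U"
        then have "y = x * (y / x)" "y / x \<in> U" using x by (auto simp: U_def)
        then show "y \<in> (*) x ` U" by blast
      qed
    qed
  qed
  have "(\<Prod>y\<in>U. x*y) = (\<Prod>y\<in>U. y)" using prod.reindex_bij_betw[OF bij, of "\<lambda>y. y"] by simp
  moreover have "(\<Prod>y\<in>U. x*y) = x ^ card U * (\<Prod>y\<in>U. y)" by (simp add: prod.distrib)
  moreover have "(\<Prod>y\<in>U. y) \<noteq> 0" using fin by (simp add: U_def)
  ultimately have "x ^ card U = 1" by simp
  then show ?thesis using cU by simp
qed

lemma cube_add:
  assumes "(3::'a::comm_ring_1) = 0"
  shows "(x + y)^3 = x^3 + (y::'a)^3"
proof -
  have "(x+y)^3 = x^3 + y^3 + 3 * (x*x*y + x*y*y)"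
    by (simp add: power3_eq_cube algebra_simps)
  then show ?thesis using assms by simp
qed

lemma cube_sum:
  assumes "(3::'a::comm_ring_1) = 0"
  shows "(\<Sum>i\<in>A. f i)^3 = (\<Sum>i\<in>A. (f i)^3 :: 'a)"
  by (induction A rule: infinite_finite_induct) (simp_all add: cube_add[OF assms])

lemma F3_elems:
  assumes c3: "(3::'a::{field,finite}) = 0"
  shows "prime_subfield = {0, 1, 2::'a}"
proof -
  have "of_nat k = (of_nat (k mod 3) :: 'a)" for k
  proof -
    have "of_nat k = (of_nat (3 * (k div 3) + k mod 3) :: 'a)" by simp
    also have "\<dots> = of_nat 3 * of_nat (k div 3) + of_nat (k mod 3)" by (simp only: of_nat_add of_nat_mult)
    finally show ?thesis using c3 by simp
  qed
  moreover have "k mod 3 = 0 \<or> k mod 3 = 1 \<or> k mod 3 = 2" for k :: nat by arith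
  ultimately have "of_nat k \<in> {0,1,2::'a}" for k
    by (metis insert_iff of_nat_0 of_nat_1 of_nat_numeral)
  moreover have "(0::'a) = of_nat 0" "(1::'a) = of_nat 1" "(2::'a) = of_nat 2" by simp_all
  ultimately show ?thesis unfolding prime_subfield_def by blast
qed

lemma F3_card:
  assumes c3: "(3::'a::{field,finite}) = 0"
  shows "card {0, 1, 2::'a} = 3"
proof -
  have "(2::'a) \<noteq> 0"
  proof
    assume "(2::'a) = 0"
    have "(3::'a) = 2 + 1" by simp
    then have "(3::'a) = 1" using \<open>(2::'a) = 0\<close> by simp
    then show False using c3 by simp
  qed
  moreover have "(2::'a) \<noteq> 1"
  proof
    assume "(2::'a) = 1"
    have "(3::'a) = 2 + 1" by simp
    then have "(3::'a) = 2" using \<open>(2::'a) = 1\<close> by simp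
    then show False using c3 \<open>(2::'a) = 1\<close> by simp
  qed
  ultimately show ?thesis by simp
qed

lemma cube_eq_iff:
  assumes c3: "(3::'a::{field,finite}) = 0"
  shows "(x::'a)^3 = x \<longleftrightarrow> x \<in> prime_subfield"
proof -
  have "(3::'a) = 2 + 1" by simp
  then have two: "(2::'a) = -1" using c3 by (simp add: eq_neg_iff_add_eq_0)
  have "x^3 - x = x * (x - 1) * (x - 2)"
    using c3 two by (simp add: power3_eq_cube algebra_simps)
  then have "x^3 = x \<longleftrightarrow> x * (x - 1) * (x - 2) = 0" by (metis eq_iff_diff_eq_0)
  also have "\<dots> \<longleftrightarrow> x \<in> {0,1,2}" by auto
  finally show ?thesis using F3_elems[OF c3] by simp
qed


abbreviation cf :: "'a::zero poly \<Rightarrow> nat \<Rightarrow> 'a" where "cf \<equiv> Polynomial.coeff"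

definition fr :: "'a::comm_ring_1 poly \<Rightarrow> 'a poly" where
  "fr p = map_poly (\<lambda>x. x^3) p"

lemma coeff_fr: "cf (fr p) i = (cf p i)^3"
  unfolding fr_def by (simp add: coeff_map_poly)

lemma fr_mult:
  assumes c3: "(3::'a::comm_ring_1) = 0"
  shows "fr (p * q) = fr p * fr (q :: 'a poly)"
proof (rule poly_eqI)
  fix n
  show "cf (fr (p * q)) n = cf (fr p * fr q) n"
    by (simp add: coeff_fr coeff_mult cube_sum[OF c3] power_mult_distrib)
qed

lemma fr_1: "fr 1 = 1" unfolding fr_def by simp

lemma fr_prod:
  assumes c3: "(3::'a::comm_ring_1) = 0"
  shows "fr (\<Prod>j\<in>A. f j) = (\<Prod>j\<in>A. fr (f j :: 'a poly))"
  by (induction A rule: infinite_finite_induct) (simp_all add: fr_1 fr_mult[OF c3])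

lemma fr_lin: "fr [:-c, 1:] = [:-(c^3), (1::'a::comm_ring_1):]"
  unfolding fr_def by (simp add: map_poly_pCons)

lemma fr_id_iff:
  assumes c3: "(3::'a::{field,finite}) = 0"
  shows "fr (p::'a poly) = p \<longleftrightarrow> (\<forall>i. cf p i \<in> prime_subfield)"
  using cube_eq_iff[OF c3] by (auto simp: poly_eq_iff coeff_fr)

lemma rot3:
  assumes m: "m \<ge> 1" and j1: "1 \<le> j" and j2: "j \<le> 3^m - 2"
  shows "(3*j) mod (3^m - 1) = 3*(j mod 3^(m-1)) + j div 3^(m-1)"
    and "1 \<le> 3*(j mod 3^(m-1)) + j div 3^(m-1)"
    and "3*(j mod 3^(m-1)) + j div 3^(m-1) \<le> 3^m - 2"
    and "w3 (3*(j mod 3^(m-1)) + j div 3^(m-1)) = w3 j"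
proof -
  define M where "M = (3::nat)^(m-1)"
  have M3: "3^m = 3*M" using m unfolding M_def by (cases m) auto
  define r where "r = j mod M"
  define d where "d = j div M"
  have Mpos: "M > 0" by (simp add: M_def)
  have jrd: "j = d*M + r" by (simp add: r_def d_def)
  have r: "r < M" using Mpos by (simp add: r_def)
  have "j < 3*M" using j2 M3 Mpos by simp
  then have d: "d < 3" using Mpos by (simp add: d_def less_mult_imp_div_less)
  have x_le: "3*r + d \<le> 3*M - 2"
  proof (rule ccontr)
    assume "\<not> ?thesis"
    then have "3*r + d \<ge> 3*M - 1" by simp
    then have "r = M - 1" "d = 2" using r d by auto
    then have "j = 3*M - 1" using jrd Mpos by (simp add: algebra_simps)
    then show False using j2 M3 Mpos by simp
  qed
  have x_ge: "1 \<le> 3*r + d"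
  proof (rule ccontr)
    assume "\<not> ?thesis"
    then have "r = 0" "d = 0" by auto
    then show False using jrd j1 by simp
  qed
  have e: "3*j = d*(3*M - 1) + (3*r + d)"
  proof -
    have "d*(3*M - 1) + d = d*(3*M)" using Mpos by (simp add: diff_mult_distrib2)
    then show ?thesis using jrd by (simp add: algebra_simps)
  qed
  have lt: "3*r + d < 3*M - 1" using x_le Mpos by linarith
  have "(3*j) mod (3*M - 1) = (3*r + d) mod (3*M - 1)" unfolding e by simp
  also have "\<dots> = 3*r + d" using lt by (rule mod_less)
  finally have "(3*j) mod (3*M - 1) = 3*r + d" .
  then show "(3*j) mod (3^m - 1) = 3*(j mod 3^(m-1)) + j div 3^(m-1)"
    using M3 by (simp add: r_def d_def M_def)
  show "1 \<le> 3*(j mod 3^(m-1)) + j div 3^(m-1)" using x_ge by (simp add: r_def d_def M_def)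
  show "3*(j mod 3^(m-1)) + j div 3^(m-1) \<le> 3^m - 2" using x_le M3 by (simp add: r_def d_def M_def)
  have "w3 j = w3 d + w3 r" using jrd r w3_split[of r "m-1" d] by (simp add: M_def)
  moreover have "w3 d = d"
  proof -
    have "d = 0 \<or> d = 1 \<or> d = 2" using d by auto
    then show ?thesis using w3_small by auto
  qed
  moreover have "w3 (3*r+d) = d + w3 r" using d by (rule w3_step)
  ultimately show "w3 (3*(j mod 3^(m-1)) + j div 3^(m-1)) = w3 j" by (simp add: r_def d_def M_def)
qed


lemma Tset_finite: "finite (Tset i1 i2 m)"
  by (rule finite_subset[of _ "{..3^m}"]) (auto simp: Tset_def)

lemma sigma_inj:
  assumes "(M::nat) > 0"
  shows "inj_on (\<lambda>j. 3*(j mod M) + j div M) {j. j < 3*M}"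
proof (rule inj_onI)
  fix x y assume x: "x \<in> {j. j < 3*M}" and y: "y \<in> {j. j < 3*M}"
    and e: "3*(x mod M) + x div M = 3*(y mod M) + y div M"
  have xd: "x div M < 3" using x assms by (simp add: less_mult_imp_div_less)
  have yd: "y div M < 3" using y assms by (simp add: less_mult_imp_div_less)
  have "(3*(x mod M) + x div M) mod 3 = x div M" using xd by simp
  moreover have "(3*(y mod M) + y div M) mod 3 = y div M" using yd by simp
  ultimately have d: "x div M = y div M" using e by simp
  then have "x mod M = y mod M" using e by simp
  then show "x = y" using d by (metis div_mult_mod_eq)
qed

context
  fixes \<alpha> :: "'a::{field,finite}" and m :: nat
  assumes card: "card (UNIV::'a set) = 3^m" and prim: "primitive_elem \<alpha>" and m1: "m \<ge> 1"
begin

lemma c3: "(3::'a) = 0" using char3[OF card] m1 by simp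

lemma alpha_nz: "\<alpha> \<noteq> 0" using prim by (simp add: primitive_elem_def)

lemma alpha_n: "\<alpha>^(3^m - 1) = 1"
  using fermat_field[OF alpha_nz] card by simp

lemma alpha_mod: "\<alpha>^k = \<alpha>^(k mod (3^m - 1))"
proof -
  have "\<alpha>^k = \<alpha>^((3^m-1) * (k div (3^m-1)) + k mod (3^m - 1))" by simp
  also have "\<dots> = (\<alpha>^(3^m-1))^(k div (3^m-1)) * \<alpha>^(k mod (3^m - 1))"
    by (simp only: power_add power_mult)
  finally show ?thesis using alpha_n by simp
qed

lemma n_pos: "(3::nat)^m - 1 > 0"
  using m1 by (metis diff_is_0_eq gr0I less_one nat_less_le one_less_power zero_less_numeral one_less_numeral_iff semiring_norm(77) not_less)

lemma alpha_inj: "inj_on (\<lambda>k. \<alpha>^k) {..<3^m-1}"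
proof -
  define U where "U = (UNIV :: 'a set) - {0}"
  have cU: "card U = 3^m - 1" by (simp add: U_def card_Diff_singleton card)
  have "(\<lambda>k. \<alpha>^k) ` {..<3^m-1} = U"
  proof
    show "(\<lambda>k. \<alpha>^k) ` {..<3^m-1} \<subseteq> U" using alpha_nz by (auto simp: U_def)
    show "U \<subseteq> (\<lambda>k. \<alpha>^k) ` {..<3^m-1}"
    proof
      fix x assume "x \<in> U"
      then have "x \<noteq> 0" by (simp add: U_def)
      then obtain i where "x = \<alpha>^i" using prim by (auto simp: primitive_elem_def)
      then have "x = \<alpha>^(i mod (3^m-1))" using alpha_mod by simp
      moreover have "i mod (3^m-1) < 3^m-1" using n_pos by simp
      ultimately show "x \<in> (\<lambda>k. \<alpha>^k) ` {..<3^m-1}" by blast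
    qed
  qed
  then have "card ((\<lambda>k. \<alpha>^k) ` {..<3^m-1}) = card {..<(3::nat)^m-1}" using cU by simp
  then show ?thesis by (intro eq_card_imp_inj_on) simp_all
qed

lemma alpha_eq: "\<alpha>^a = \<alpha>^b \<longleftrightarrow> a mod (3^m-1) = b mod (3^m-1)"
proof
  assume "\<alpha>^a = \<alpha>^b"
  then have "\<alpha>^(a mod (3^m-1)) = \<alpha>^(b mod (3^m-1))" using alpha_mod by metis
  then show "a mod (3^m-1) = b mod (3^m-1)"
    using alpha_inj n_pos by (auto dest: inj_onD)
next
  assume "a mod (3^m-1) = b mod (3^m-1)"
  then show "\<alpha>^a = \<alpha>^b" using alpha_mod by metis
qed

lemma gpoly_fr: "fr (gpoly \<alpha> i1 i2 m) = gpoly \<alpha> i1 i2 m"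
proof -
  define T where "T = Tset i1 i2 m"
  define M where "M = (3::nat)^(m-1)"
  have M3: "3^m = 3*M" using m1 unfolding M_def by (cases m) auto
  have Mpos: "M > 0" by (simp add: M_def)
  define \<sigma> where "\<sigma> = (\<lambda>j::nat. 3*(j mod M) + j div M)"
  have fin: "finite T" by (simp add: T_def Tset_finite)
  have Tsub: "T \<subseteq> {j. j < 3*M}" using M3 Mpos by (auto simp: T_def Tset_def)
  have inj: "inj_on \<sigma> T" unfolding \<sigma>_def by (rule inj_on_subset[OF sigma_inj[OF Mpos] Tsub])
  have into: "\<sigma> ` T \<subseteq> T"
  proof
    fix x assume "x \<in> \<sigma> ` T"
    then obtain j where j: "j \<in> T" and x: "x = \<sigma> j" by blast
    have j1: "1 \<le> j" and j2: "j \<le> 3^m - 2" using j by (auto simp: T_def Tset_def)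
    note r = rot3[OF m1 j1 j2]
    show "x \<in> T" using j r(2,3,4) unfolding x \<sigma>_def M_def T_def Tset_def by auto
  qed
  have onto: "\<sigma> ` T = T" using endo_inj_surj[OF fin into inj] .
  have pw: "(\<alpha>^j)^3 = \<alpha>^(\<sigma> j)" if "j \<in> T" for j
  proof -
    have j1: "1 \<le> j" and j2: "j \<le> 3^m - 2" using that by (auto simp: T_def Tset_def)
    have "(\<alpha>^j)^3 = \<alpha>^(3*j)" by (simp add: power_mult[symmetric] mult.commute)
    also have "\<dots> = \<alpha>^((3*j) mod (3^m-1))" by (rule alpha_mod)
    also have "(3*j) mod (3^m-1) = \<sigma> j" using rot3(1)[OF m1 j1 j2] by (simp add: \<sigma>_def M_def)
    finally show ?thesis .
  qed
  have "fr (gpoly \<alpha> i1 i2 m) = (\<Prod>j\<in>T. [:- ((\<alpha>^j)^3), 1:])"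
    unfolding gpoly_def T_def[symmetric] by (simp add: fr_prod[OF c3] fr_lin)
  also have "\<dots> = (\<Prod>j\<in>T. [:- (\<alpha>^(\<sigma> j)), 1:])" using pw by (intro prod.cong) simp_all
  also have "\<dots> = (\<Prod>j\<in>\<sigma> ` T. [:- (\<alpha>^j), 1:])" using prod.reindex[OF inj, of "\<lambda>j. [:- (\<alpha>^j), 1:]"] by simp
  also have "\<dots> = gpoly \<alpha> i1 i2 m" using onto by (simp add: gpoly_def T_def)
  finally show ?thesis .
qed

lemma gpoly_nz: "gpoly \<alpha> i1 i2 m \<noteq> 0"
  unfolding gpoly_def by (simp add: Tset_finite)

lemma gpoly_degree: "degree (gpoly \<alpha> i1 i2 m) = card (Tset i1 i2 m)"
  unfolding gpoly_def by (subst degree_prod_eq_sum_degree) auto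

lemma gpoly_root: "j \<in> Tset i1 i2 m \<Longrightarrow> poly (gpoly \<alpha> i1 i2 m) (\<alpha>^j) = 0"
proof -
  assume j: "j \<in> Tset i1 i2 m"
  show ?thesis unfolding gpoly_def poly_prod
    by (rule prod_zero) (use j Tset_finite in auto)
qed

end

lemma sum3: "(\<Sum>j<3*(M::nat). (f::nat\<Rightarrow>int) j) = (\<Sum>q<M. f (3*q) + f (3*q+1) + f (3*q+2) :: int)"
proof (induction M)
  case 0 then show ?case by simp
next
  case (Suc M)
  have "{..<3*Suc M} = {..<3*M} \<union> {3*M, 3*M+1, 3*M+2}" by auto
  then have "(\<Sum>j<3*Suc M. f j) = (\<Sum>j<3*M. f j) + (f (3*M) + f (3*M+1) + f (3*M+2))"
    by (simp add: sum.union_disjoint algebra_simps)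
  then show ?case using Suc.IH by simp
qed

definition Nc :: "nat \<Rightarrow> nat \<Rightarrow> int" where
  "Nc m r = (\<Sum>j<3^m. if w3 j mod 4 = r then 1 else 0)"

definition cc :: "nat \<Rightarrow> int" where
  "cc k = (if k = 0 then 1 else if k = 2 then -1 else 0)"

lemma mod4_0: fixes k r :: nat assumes "k < 4" "r < 4"
  shows "(1 + k) mod 4 = r \<longleftrightarrow> k = (r+3) mod 4" "(2 + k) mod 4 = r \<longleftrightarrow> k = (r+2) mod 4"
proof -
  have "k = 0 \<or> k = 1 \<or> k = 2 \<or> k = 3" "r = 0 \<or> r = 1 \<or> r = 2 \<or> r = 3" using assms by auto
  then show "(1 + k) mod 4 = r \<longleftrightarrow> k = (r+3) mod 4" "(2 + k) mod 4 = r \<longleftrightarrow> k = (r+2) mod 4"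
    by (elim disjE; simp)+
qed

lemma mod4_1: fixes w r :: nat assumes "r < 4" shows "(1 + w) mod 4 = r \<longleftrightarrow> w mod 4 = (r+3) mod 4"
proof -
  have "(1 + w) mod 4 = (1 + w mod 4) mod 4" by (metis mod_add_right_eq)
  moreover have "w mod 4 < 4" by simp
  ultimately show ?thesis using assms mod4_0 by simp
qed

lemma mod4_2: fixes w r :: nat assumes "r < 4" shows "(2 + w) mod 4 = r \<longleftrightarrow> w mod 4 = (r+2) mod 4"
proof -
  have "(2 + w) mod 4 = (2 + w mod 4) mod 4" by (metis mod_add_right_eq)
  moreover have "w mod 4 < 4" by simp
  ultimately show ?thesis using assms mod4_0 by simp
qed

lemma cc_shift: "r \<le> 4 \<Longrightarrow> (m + 4 - r) mod 4 = (m mod 4 + 4 - r) mod (4::nat)"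
  by (metis Nat.add_diff_assoc mod_add_left_eq)

lemma Nc_rec:
  assumes r: "r < 4"
  shows "Nc (Suc m) r = Nc m r + Nc m ((r+3) mod 4) + Nc m ((r+2) mod 4)"
proof -
  have "Nc (Suc m) r = (\<Sum>q<3^m. (if w3 (3*q) mod 4 = r then 1 else 0) + (if w3 (3*q+1) mod 4 = r then 1 else 0)
          + (if w3 (3*q+2) mod 4 = r then 1 else 0))"
    unfolding Nc_def by (simp add: sum3)
  also have "\<dots> = (\<Sum>q<3^m. (if w3 q mod 4 = r then 1 else 0) + (if w3 q mod 4 = (r+3) mod 4 then 1 else 0)
          + (if w3 q mod 4 = (r+2) mod 4 then 1 else 0))"
  proof (rule sum.cong[OF refl])
    fix q
    have a: "w3 (3*q) = w3 q" using w3_step[of 0 q] by simp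
    have b: "w3 (3*q+1) = 1 + w3 q" using w3_step[of 1 q] by simp
    have c: "w3 (3*q+2) = 2 + w3 q" using w3_step[of 2 q] by simp
    have "(1 + w3 q) mod 4 = r \<longleftrightarrow> w3 q mod 4 = (r+3) mod 4" using r by (rule mod4_1)
    moreover have "(2 + w3 q) mod 4 = r \<longleftrightarrow> w3 q mod 4 = (r+2) mod 4" using r by (rule mod4_2)
    ultimately show "(if w3 (3*q) mod 4 = r then 1 else 0) + (if w3 (3*q+1) mod 4 = r then 1 else 0)
          + (if w3 (3*q+2) mod 4 = r then 1 else (0::int)) = (if w3 q mod 4 = r then 1 else 0) + (if w3 q mod 4 = (r+3) mod 4 then 1 else 0)
          + (if w3 q mod 4 = (r+2) mod 4 then 1 else 0)" using a b c by simp
  qed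
  also have "\<dots> = Nc m r + Nc m ((r+3) mod 4) + Nc m ((r+2) mod 4)"
    unfolding Nc_def by (simp add: sum.distrib)
  finally show ?thesis .
qed

lemma Nc_formula: "r < 4 \<Longrightarrow> 4 * Nc m r = 3^m + (-1)^r + 2 * cc ((m + 4 - r) mod 4)"
proof (induction m arbitrary: r)
  case 0
  have "Nc 0 r = (if r = 0 then 1 else 0)" by (simp add: Nc_def)
  moreover have "r = 0 \<or> r = 1 \<or> r = 2 \<or> r = 3" using 0 by auto
  ultimately show ?case by (auto simp: cc_def)
next
  case (Suc m)
  have r: "r = 0 \<or> r = 1 \<or> r = 2 \<or> r = 3" using Suc.prems by auto
  have k: "m mod 4 = 0 \<or> m mod 4 = 1 \<or> m mod 4 = 2 \<or> m mod 4 = 3" by auto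
  have e: "4 * Nc (Suc m) r = 4 * Nc m r + 4 * Nc m ((r+3) mod 4) + 4 * Nc m ((r+2) mod 4)"
    using Nc_rec[OF Suc.prems] by simp
  have i1: "4 * Nc m r = 3^m + (-1)^r + 2 * cc ((m + 4 - r) mod 4)" using Suc.prems by (rule Suc.IH)
  have i2: "4 * Nc m ((r+3) mod 4) = 3^m + (-1)^((r+3) mod 4) + 2 * cc ((m + 4 - (r+3) mod 4) mod 4)"
    by (rule Suc.IH) simp
  have i3: "4 * Nc m ((r+2) mod 4) = 3^m + (-1)^((r+2) mod 4) + 2 * cc ((m + 4 - (r+2) mod 4) mod 4)"
    by (rule Suc.IH) simp
  have sm: "Suc m mod 4 = (m mod 4 + 1) mod 4" by (metis Suc_eq_plus1 mod_add_left_eq)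
  have le: "r \<le> 4" "(r+3) mod 4 \<le> 4" "(r+2) mod 4 \<le> 4" using Suc.prems by auto
  show ?case unfolding e i1 i2 i3 cc_shift[OF le(1), of m] cc_shift[OF le(2), of m] cc_shift[OF le(3), of m]
    cc_shift[OF le(1), of "Suc m"] sm power_Suc
    using r k by (elim disjE; simp add: cc_def)
qed


lemma cardT:
  assumes od: "odd m"
  shows "m mod 4 = 1 \<Longrightarrow> 2 * int (card (Tset 1 2 m)) = 3^m - 1"
    and "m mod 4 = 3 \<Longrightarrow> 2 * int (card (Tset 1 2 m)) = 3^m - 3"
proof -
  define P where "P = (\<lambda>j. w3 j mod 4 = 1 \<or> w3 j mod 4 = 2)"
  define S where "S = {j \<in> {..<(3::nat)^m}. P j}"
  have finS: "finite S" by (simp add: S_def)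
  have "int (card S) = (\<Sum>j\<in>S. 1)" by simp
  also have "\<dots> = (\<Sum>j<3^m. if P j then 1 else 0)" unfolding S_def by (rule sum.inter_filter) simp
  also have "\<dots> = (\<Sum>j<3^m. (if w3 j mod 4 = 1 then 1 else 0) + (if w3 j mod 4 = 2 then 1 else 0))"
    by (rule sum.cong) (auto simp: P_def)
  also have "\<dots> = Nc m 1 + Nc m 2" by (simp add: Nc_def sum.distrib)
  finally have cS: "int (card S) = Nc m 1 + Nc m 2" .
  have wtop: "w3 (3^m - 1) = 2*m" using w3_compl[of 0 m] by simp
  have "2*m mod 4 = 2" using od by (metis dvd_mult_cancel1 mod_mult_mult1 odd_iff_mod_2_eq_one mult_numeral_1_right numeral_Bit0 numeral_One zero_neq_numeral mult_2 mod_mult_self4 mult.commute)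
  then have top: "3^m - 1 \<in> S" unfolding S_def P_def using wtop by simp
  have "Tset 1 2 m = S - {3^m - 1}"
  proof
    show "Tset 1 2 m \<subseteq> S - {3^m - 1}" by (auto simp: Tset_def S_def P_def)
    show "S - {3^m - 1} \<subseteq> Tset 1 2 m"
    proof
      fix j assume j: "j \<in> S - {3^m - 1}"
      then have "j < 3^m" "j \<noteq> 3^m - 1" "P j" by (auto simp: S_def)
      moreover have "j \<noteq> 0" proof assume "j = 0" then show False using \<open>P j\<close> by (simp add: P_def) qed
      ultimately show "j \<in> Tset 1 2 m" by (auto simp: Tset_def P_def)
    qed
  qed
  then have "card (Tset 1 2 m) = card S - 1" using top finS by (simp add: card_Diff_singleton)
  moreover have "card S \<ge> 1" using top finS by (metis One_nat_def Suc_leI card_gt_0_iff empty_iff)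
  ultimately have cT: "int (card (Tset 1 2 m)) = Nc m 1 + Nc m 2 - 1" using cS by simp
  have f1: "4 * Nc m 1 = 3^m - 1 + 2 * cc ((m + 3) mod 4)" using Nc_formula[of 1 m] by (simp add: add.commute)
  have f2: "4 * Nc m 2 = 3^m + 1 + 2 * cc ((m + 2) mod 4)" using Nc_formula[of 2 m] by (simp add: add.commute)
  have ma: "(m + c) mod 4 = (m mod 4 + c) mod (4::nat)" for c by (metis mod_add_left_eq)
  show "m mod 4 = 1 \<Longrightarrow> 2 * int (card (Tset 1 2 m)) = 3^m - 1"
  proof -
    assume "m mod 4 = 1"
    then have "(m+3) mod 4 = 0" "(m+2) mod 4 = 3" using ma[of 3] ma[of 2] by simp_all
    then show ?thesis using f1 f2 cT by (simp add: cc_def)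
  qed
  show "m mod 4 = 3 \<Longrightarrow> 2 * int (card (Tset 1 2 m)) = 3^m - 3"
  proof -
    assume "m mod 4 = 3"
    then have "(m+3) mod 4 = 2" "(m+2) mod 4 = 1" using ma[of 3] ma[of 2] by simp_all
    then show ?thesis using f1 f2 cT by (simp add: cc_def)
  qed
qed


lemma card_polys:
  fixes F :: "'a::zero set"
  assumes finF: "finite F" and F0: "0 \<in> F" and k: "k \<ge> 1"
  shows "finite {p::'a poly. (\<forall>i. cf p i \<in> F) \<and> degree p < k}
       \<and> card {p::'a poly. (\<forall>i. cf p i \<in> F) \<and> degree p < k} = card F ^ k"
  using k
proof (induction k rule: dec_induct)
  case base
  have "{p::'a poly. (\<forall>i. cf p i \<in> F) \<and> degree p < 1} = (\<lambda>a. [:a:]) ` F"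
  proof
    show "{p::'a poly. (\<forall>i. cf p i \<in> F) \<and> degree p < 1} \<subseteq> (\<lambda>a. [:a:]) ` F"
    proof
      fix p :: "'a poly" assume p: "p \<in> {p. (\<forall>i. cf p i \<in> F) \<and> degree p < 1}"
      then have "degree p = 0" by simp
      then have "p = [:cf p 0:]" by (simp add: degree_0_id)
      moreover have "cf p 0 \<in> F" using p by simp
      ultimately show "p \<in> (\<lambda>a. [:a:]) ` F" by blast
    qed
    show "(\<lambda>a. [:a:]) ` F \<subseteq> {p::'a poly. (\<forall>i. cf p i \<in> F) \<and> degree p < 1}"
    proof
      fix p assume "p \<in> (\<lambda>a. [:a:]) ` F"
      then obtain a where a: "a \<in> F" "p = [:a:]" by blast
      have "cf p i \<in> F" for i using a F0 by (cases i) auto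
      then show "p \<in> {p::'a poly. (\<forall>i. cf p i \<in> F) \<and> degree p < 1}" using a by simp
    qed
  qed
  moreover have "inj_on (\<lambda>a. [:a:]) F" by (auto intro: inj_onI)
  ultimately show ?case using finF by (simp add: card_image)
next
  case (step k)
  define Pk where "Pk = {p::'a poly. (\<forall>i. cf p i \<in> F) \<and> degree p < k}"
  have k1: "k \<ge> 1" using step.hyps by simp
  have eq: "{p::'a poly. (\<forall>i. cf p i \<in> F) \<and> degree p < Suc k} = (\<lambda>(a,q). pCons a q) ` (F \<times> Pk)"
  proof
    show "{p::'a poly. (\<forall>i. cf p i \<in> F) \<and> degree p < Suc k} \<subseteq> (\<lambda>(a,q). pCons a q) ` (F \<times> Pk)"
    proof
      fix p :: "'a poly" assume p: "p \<in> {p. (\<forall>i. cf p i \<in> F) \<and> degree p < Suc k}"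
      obtain a q where pq: "p = pCons a q" by (cases p) simp
      have "a \<in> F" using p pq by (metis (mono_tags, lifting) coeff_pCons_0 mem_Collect_eq)
      moreover have "cf q i \<in> F" for i using p pq by (metis (mono_tags, lifting) coeff_pCons_Suc mem_Collect_eq)
      moreover have "degree q < k"
      proof (cases "q = 0")
        case True then show ?thesis using k1 by simp
      next
        case False then show ?thesis using p pq by simp
      qed
      ultimately show "p \<in> (\<lambda>(a,q). pCons a q) ` (F \<times> Pk)" using pq unfolding Pk_def by force
    qed
    show "(\<lambda>(a,q). pCons a q) ` (F \<times> Pk) \<subseteq> {p::'a poly. (\<forall>i. cf p i \<in> F) \<and> degree p < Suc k}"
    proof
      fix p assume "p \<in> (\<lambda>(a,q). pCons a q) ` (F \<times> Pk)"
      then obtain a q where a: "a \<in> F" and q: "q \<in> Pk" and pq: "p = pCons a q" by auto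
      have "cf p i \<in> F" for i using a q pq by (cases i) (auto simp: Pk_def)
      moreover have "degree p < Suc k" using q pq by (simp add: Pk_def degree_pCons_eq_if)
      ultimately show "p \<in> {p::'a poly. (\<forall>i. cf p i \<in> F) \<and> degree p < Suc k}" by simp
    qed
  qed
  have inj: "inj_on (\<lambda>(a,q). pCons a q) (F \<times> Pk)" by (auto intro: inj_onI)
  have finPk: "finite Pk" and cPk: "card Pk = card F ^ k" using step.IH by (simp_all add: Pk_def)
  show ?case unfolding eq using inj finF finPk cPk by (simp add: card_image card_cartesian_product)
qed


lemma card_T_lt: "card (Tset i1 i2 m) < 3^m - 1" if "m \<ge> 1"
proof -
  have "Tset i1 i2 m \<subseteq> {1..3^m - 2}" by (auto simp: Tset_def)
  then have "card (Tset i1 i2 m) \<le> card {1..(3::nat)^m - 2}" by (intro card_mono) simp_all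
  also have "\<dots> = 3^m - 2" by simp
  also have "\<dots> < 3^m - 1"
  proof -
    have "(3::nat)^m \<ge> 3" using that by (metis power_one_right power_increasing zero_less_numeral one_le_numeral)
    then show ?thesis by simp
  qed
  finally show ?thesis .
qed

context
  fixes \<alpha> :: "'a::{field,finite}" and m :: nat
  assumes card: "card (UNIV::'a set) = 3^m" and prim: "primitive_elem \<alpha>" and m1: "m \<ge> 1"
begin

lemma tcode_eq:
  "tcode \<alpha> 1 2 m = (\<lambda>q. gpoly \<alpha> 1 2 m * q) `
     {q. (\<forall>i. cf q i \<in> prime_subfield) \<and> degree q < (3^m - 1) - card (Tset 1 2 m)}"
  (is "_ = ?f ` ?P")
proof
  note c3 = c3[OF card prim m1]
  note gfr = gpoly_fr[OF card prim m1, of 1 2]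
  note gnz = gpoly_nz[OF card prim m1]
  note gdeg = gpoly_degree[OF card prim m1]
  have lt: "card (Tset 1 2 m) < 3^m - 1" using card_T_lt[OF m1] .
  show "tcode \<alpha> 1 2 m \<subseteq> ?f ` ?P"
  proof
    fix c assume c: "c \<in> tcode \<alpha> 1 2 m"
    then have cF: "\<forall>i. cf c i \<in> prime_subfield" and cd: "degree c < 3^m - 1" and gc: "gpoly \<alpha> 1 2 m dvd c"
      by (auto simp: tcode_def)
    obtain q where q: "c = gpoly \<alpha> 1 2 m * q" using gc by (auto elim: dvdE)
    have "fr c = c" using cF fr_id_iff[OF c3] by blast
    then have "gpoly \<alpha> 1 2 m * fr q = gpoly \<alpha> 1 2 m * q" using q fr_mult[OF c3] gfr by metis
    then have "fr q = q" using gnz by simp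
    then have qF: "\<forall>i. cf q i \<in> prime_subfield" using fr_id_iff[OF c3] by blast
    have qd: "degree q < (3^m - 1) - card (Tset 1 2 m)"
    proof (cases "q = 0")
      case True then show ?thesis using lt by simp
    next
      case False
      then have "degree c = degree (gpoly \<alpha> 1 2 m) + degree q" using q gnz by (simp add: degree_mult_eq)
      then show ?thesis using cd gdeg by simp
    qed
    show "c \<in> ?f ` ?P" using q qF qd by blast
  qed
  show "?f ` ?P \<subseteq> tcode \<alpha> 1 2 m"
  proof
    fix c assume "c \<in> ?f ` ?P"
    then obtain q where qF: "\<forall>i. cf q i \<in> prime_subfield" and qd: "degree q < (3^m - 1) - card (Tset 1 2 m)"
      and q: "c = gpoly \<alpha> 1 2 m * q" by blast
    have "fr q = q" using qF fr_id_iff[OF c3] by blast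
    then have "fr c = c" using q fr_mult[OF c3] gfr by metis
    then have cF: "\<forall>i. cf c i \<in> prime_subfield" using fr_id_iff[OF c3] by blast
    have "degree c \<le> degree (gpoly \<alpha> 1 2 m) + degree q" unfolding q by (rule degree_mult_le)
    then have cd: "degree c < 3^m - 1" using qd gdeg lt by simp
    show "c \<in> tcode \<alpha> 1 2 m" using cF cd q by (auto simp: tcode_def)
  qed
qed

lemma tcode_card:
  "card (tcode \<alpha> 1 2 m) = 3 ^ ((3^m - 1) - card (Tset 1 2 m))"
proof -
  note c3 = c3[OF card prim m1]
  have lt: "card (Tset 1 2 m) < 3^m - 1" using card_T_lt[OF m1] .
  define k where "k = (3^m - 1) - card (Tset 1 2 m)"
  have k1: "k \<ge> 1" using lt by (simp add: k_def)
  have F: "prime_subfield = {0, 1, 2::'a}" by (rule F3_elems[OF c3])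
  have fin: "finite (prime_subfield :: 'a set)" unfolding F by simp
  have F0: "(0::'a) \<in> prime_subfield" unfolding F by simp
  have cF: "card (prime_subfield :: 'a set) = 3" using F F3_card[OF c3] by simp
  note cp = card_polys[OF fin F0 k1]
  have inj: "inj_on (\<lambda>q. gpoly \<alpha> 1 2 m * q) X" for X
    using gpoly_nz[OF card prim m1] by (auto intro: inj_onI)
  have "card (tcode \<alpha> 1 2 m) = card {q::'a poly. (\<forall>i. cf q i \<in> prime_subfield) \<and> degree q < k}"
    unfolding tcode_eq k_def[symmetric] by (intro card_image inj_onI) (use gpoly_nz[OF card prim m1] in auto)
  then show ?thesis using cp cF by (simp add: k_def)
qed

lemma tcode_dim:
  "dim3 (tcode \<alpha> 1 2 m) = (3^m - 1) - card (Tset 1 2 m)"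
  unfolding dim3_def tcode_card
  by (rule the_equality) (simp_all add: power_inject_exp)

end


lemma poly_sum_less:
  fixes p :: "'a::comm_ring_1 poly"
  assumes "degree p < L"
  shows "poly p y = (\<Sum>j<L. cf p j * y^j)"
proof -
  have "poly p y = (\<Sum>j\<le>degree p. cf p j * y^j)" by (rule poly_altdef)
  also have "\<dots> = (\<Sum>j<L. cf p j * y^j)"
    by (rule sum.mono_neutral_left) (use assms in \<open>auto simp: coeff_eq_0\<close>)
  finally show ?thesis .
qed

lemma bch:
  fixes \<beta> :: "'a::field" and c :: "'a poly"
  assumes inj: "inj_on (\<lambda>k. \<beta>^k) {..<n}"
      and deg: "degree c < n"
      and zeros: "\<And>i. 1 \<le> i \<Longrightarrow> i \<le> L \<Longrightarrow> poly c (\<beta>^i) = 0"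
      and nz: "c \<noteq> 0" and bnz: "\<beta> \<noteq> 0"
  shows "L < hweight c"
proof (rule ccontr)
  assume "\<not> L < hweight c"
  then have cS: "card {k. cf c k \<noteq> 0} \<le> L" by (simp add: hweight_def)
  define S where "S = {k. cf c k \<noteq> 0}"
  have Ssub: "S \<subseteq> {..<n}" using deg by (auto simp: S_def) (metis coeff_eq_0 le_less_trans not_less)
  have finS: "finite S" using Ssub finite_subset by blast
  have "S \<noteq> {}"
  proof
    assume "S = {}"
    then have "c = 0" by (auto simp: S_def poly_eq_iff)
    then show False using nz by simp
  qed
  then obtain k0 where k0: "k0 \<in> S" by blast
  have cardS: "card S \<le> L" using cS by (simp add: S_def)
  have L1: "card S \<ge> 1" using k0 finS by (metis One_nat_def Suc_leI card_gt_0_iff empty_iff)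
  define P where "P = (\<Prod>k\<in>S-{k0}. [:- (\<beta>^k), 1:])"
  have "degree P \<le> (\<Sum>k\<in>S-{k0}. degree [:- (\<beta>^k), 1:])"
    unfolding P_def using degree_prod_sum_le[of "S-{k0}" "\<lambda>k. [:- (\<beta>^k), 1:]"] finS by (simp add: o_def)
  also have "\<dots> = card (S - {k0})" by simp
  also have "\<dots> = card S - 1" using k0 finS by simp
  finally have degP: "degree P < L" using cardS L1 by linarith
  have polyc: "poly c y = (\<Sum>k\<in>S. cf c k * y^k)" for y
  proof -
    have "poly c y = (\<Sum>k<n. cf c k * y^k)" using deg by (rule poly_sum_less)
    also have "\<dots> = (\<Sum>k\<in>S. cf c k * y^k)"
      by (rule sum.mono_neutral_right) (use Ssub in \<open>auto simp: S_def\<close>)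
    finally show ?thesis .
  qed
  have key: "(\<Sum>k\<in>S. cf c k * \<beta>^k * poly P (\<beta>^k)) = (\<Sum>j<L. cf P j * poly c (\<beta>^(Suc j)))"
  proof -
    have "(\<Sum>k\<in>S. cf c k * \<beta>^k * poly P (\<beta>^k)) = (\<Sum>k\<in>S. \<Sum>j<L. cf c k * \<beta>^k * (cf P j * (\<beta>^k)^j))"
      by (simp add: poly_sum_less[OF degP] sum_distrib_left)
    also have "\<dots> = (\<Sum>j<L. \<Sum>k\<in>S. cf P j * (cf c k * (\<beta>^(Suc j))^k))"
    proof -
      have e: "\<beta>^k * (\<beta>^k)^j = (\<beta>^(Suc j))^k" for k j :: nat
        by (metis power_Suc power_mult mult.commute)
      have e2: "(\<beta>^i)^j = (\<beta>^j)^i" for i j :: nat by (metis power_mult mult.commute)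
      show ?thesis by (subst sum.swap) (simp add: e[symmetric] algebra_simps e2)
    qed
    also have "\<dots> = (\<Sum>j<L. cf P j * poly c (\<beta>^(Suc j)))"
      by (simp add: polyc sum_distrib_left)
    finally show ?thesis .
  qed
  also have "\<dots> = 0"
  proof (rule sum.neutral, rule ballI)
    fix j assume "j \<in> {..<L}"
    then have "poly c (\<beta>^(Suc j)) = 0" by (intro zeros) auto
    then show "cf P j * poly c (\<beta>^(Suc j)) = 0" by simp
  qed
  finally have z: "(\<Sum>k\<in>S. cf c k * \<beta>^k * poly P (\<beta>^k)) = 0" .
  have "poly P (\<beta>^k) = 0" if "k \<in> S - {k0}" for k
    unfolding P_def poly_prod by (rule prod_zero) (use that finS in auto)
  then have "(\<Sum>k\<in>S. cf c k * \<beta>^k * poly P (\<beta>^k)) = cf c k0 * \<beta>^k0 * poly P (\<beta>^k0)"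
    using sum.remove[OF finS k0, of "\<lambda>k. cf c k * \<beta>^k * poly P (\<beta>^k)"] by simp
  with z have z2: "cf c k0 * \<beta>^k0 * poly P (\<beta>^k0) = 0" by simp
  have "poly P (\<beta>^k0) = (\<Prod>k\<in>S-{k0}. \<beta>^k0 - \<beta>^k)" unfolding P_def poly_prod by simp
  moreover have "\<beta>^k0 - \<beta>^k \<noteq> 0" if "k \<in> S - {k0}" for k
  proof
    assume "\<beta>^k0 - \<beta>^k = 0"
    then have "\<beta>^k0 = \<beta>^k" by simp
    then have "k0 = k" using inj Ssub k0 that by (auto dest: inj_onD)
    then show False using that by simp
  qed
  ultimately have "poly P (\<beta>^k0) \<noteq> 0" using finS by simp
  moreover note bnz
  moreover have "cf c k0 \<noteq> 0" using k0 by (simp add: S_def)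
  ultimately show False using z2 by simp
qed


lemma m4: "r < 4 \<Longrightarrow> (4*v + r) mod 4 = (r::nat)" by simp

lemma pow3_mod4: "(3::nat)^h mod 4 = (if even h then 1 else 3)"
proof (induction h)
  case 0 then show ?case by simp
next
  case (Suc h)
  have "(3::nat)^Suc h mod 4 = (3 * (3^h mod 4)) mod 4" by (simp add: mod_mult_right_eq)
  then show ?case using Suc.IH by auto
qed

context
  fixes h H a :: nat
  assumes a: "a = 3^h" and aH: "a = 2*H + 1" and h2: "h \<ge> 2"
begin

lemma a_sq: "a*a = 3^(2*h)" using a by (simp add: power_mult_distrib power_add mult_2 power2_eq_square)

lemma n_eq: "(3::nat)^(2*h+1) - 1 = 2*(H*(1+a) + a*a)"
proof -
  have "(3::nat)^(2*h+1) = 3*(a*a)" using a_sq by simp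
  then show ?thesis using aH by (simp add: algebra_simps)
qed

lemma a_ge9: "a \<ge> 9"
proof -
  have "(3::nat)^2 \<le> 3^h" using h2 by (intro power_increasing) simp_all
  then show ?thesis using a by simp
qed

lemma wa_split: "u < a \<Longrightarrow> w3 (v*a + u) = w3 v + w3 u"
  using w3_split[of u h v] a by simp

lemma wa_compl: "z < a \<Longrightarrow> w3 (a - 1 - z) = 2*h - w3 z"
  using w3_compl[of z h] a by simp

lemma wa2: "y < a*a \<Longrightarrow> w3 (a*a + y) = 1 + w3 y"
  using w3_split[of y "2*h" 1] a_sq w3_small(1) by simp

lemma wn_compl: "z < 3^(2*h+1) \<Longrightarrow> w3 (3^(2*h+1) - 1 - z) + w3 z = 2*(2*h+1)"
  using w3_compl[of z "2*h+1"] by simp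

lemma memT:
  assumes "1 \<le> x" "x < 3^(2*h+1) - 1" "w3 x mod 4 = 1 \<or> w3 x mod 4 = 2"
  shows "x \<in> Tset 1 2 (2*h+1)"
  using assms by (auto simp: Tset_def)

lemma modI:
  assumes "y = q*n + x" "x < n"
  shows "y mod n = (x::nat)"
  using assms by simp


lemma H_parity: "odd h \<Longrightarrow> odd H" "even h \<Longrightarrow> even H"
proof -
  have "a mod 4 = (if even h then 1 else 3)" using a pow3_mod4 by simp
  then show "odd h \<Longrightarrow> odd H" "even h \<Longrightarrow> even H" using aH by presburger+
qed

lemma i_mod:
  assumes "i * s + z = k * n" "k \<ge> 1" "1 \<le> z" "z < n"
  shows "(i * s) mod n = n - z" "1 \<le> n - z" "n - z < (n::nat)"
proof -
  have "i * s = (k - 1) * n + (n - z)"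
  proof -
    have "k * n = (k - 1) * n + n" using assms(2) by (metis add.commute le_add_diff_inverse mult.commute mult_Suc_right plus_1_eq_Suc)
    then show ?thesis using assms(1,4) by linarith
  qed
  then show "(i * s) mod n = n - z" using assms(3,4) by (intro modI) simp_all
  show "1 \<le> n - z" "n - z < (n::nat)" using assms(3,4) by simp_all
qed

lemma i_mod2:
  assumes "i * s + z = k * n + N" "x + z = N" "N < n"
  shows "(i * s) mod n = (x::nat)"
proof -
  have "i * s = k * n + x" using assms(1,2) by linarith
  then show ?thesis using assms(2,3) by (intro modI) simp_all
qed

lemma caseA:
  assumes ho: "odd h" and i1: "1 \<le> i" and iL: "i \<le> H + 5"
  shows "(i * ((H - 1)*(1+a) + a*a)) mod (3^(2*h+1) - 1) \<in> Tset 1 2 (2*h+1)"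
proof -
  have Hodd: "odd H" using H_parity(1)[OF ho] .
  have h3: "h \<ge> 3" using ho h2 by (cases "h = 2") auto
  have a27: "a \<ge> 27"
  proof -
    have "(3::nat)^3 \<le> 3^h" using h3 by (intro power_increasing) simp_all
    then show ?thesis using a by simp
  qed
  then have H13: "H \<ge> 13" using aH by simp
  have aa1: "1 \<le> a*a" using a27 by (simp add: Suc_le_eq)
  obtain H1 where H1: "H = Suc H1" using H13 by (cases H) auto
  define N where "N = H*(1+a) + a*a"
  define n where "n = (3::nat)^(2*h+1) - 1"
  define s where "s = (H - 1)*(1+a) + a*a"
  have nN: "n = 2*N" unfolding n_def N_def by (rule n_eq)
  have sN: "s + (1+a) = N" unfolding s_def N_def H1 by (simp add: algebra_simps)
  have Nn: "N < n" using nN a27 by (simp add: N_def)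
  have ia: "i < a" using iL H13 aH by simp
  have n3: "n = 3^(2*h+1) - 1" by (simp add: n_def)
  show ?thesis unfolding s_def[symmetric] n3[symmetric]
  proof (cases "even i")
    case True
    then obtain k where k: "i = 2*k" by (auto elim: evenE)
    have k1: "k \<ge> 1" using i1 k by simp
    define z where "z = i*a + i"
    have e1: "i * s + z = k * n" unfolding z_def nN k using sN by (simp add: algebra_simps flip: sN)
    have z1: "1 \<le> z" using i1 by (simp add: z_def)
    have zn: "z < n"
    proof -
      have "z = i * (1+a)" by (simp add: z_def algebra_simps)
      also have "\<dots> \<le> (H+5)*(1+a)" by (rule mult_le_mono1[OF iL])
      also have "\<dots> = H*(1+a) + 5*(1+a)" by (simp add: algebra_simps)
      also have "\<dots> \<le> H*(1+a) + H*(1+a)" using H13 by (intro add_left_mono mult_le_mono1) simp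
      also have "\<dots> < 2*N" using a27 by (simp add: N_def)
      finally show ?thesis using nN by simp
    qed
    note im = i_mod[OF e1 k1 z1 zn]
    have wz: "w3 z = 2 * w3 i" using wa_split[OF ia, of i] by (simp add: z_def)
    have "z < 3^(2*h+1)" using zn by (simp add: n_def)
    from wn_compl[OF this] have wx: "w3 (n - z) + w3 z = 2*(2*h+1)" by (simp add: n_def)
    have "w3 i mod 2 = 0" using w3_parity[of i] True by simp
    then obtain u where u: "w3 i = 2*u" by auto
    have W: "w3 (n - z) + 4*u = 4*h + 2" using wx unfolding wz u by simp
    then have "u \<le> h" by presburger
    then obtain v where v: "h = u + v" using le_Suc_ex by blast
    have eqv: "w3 (n - z) = 4*v + 2" using W v by linarith
    have "w3 (n - z) mod 4 = 2" unfolding eqv by (rule m4) simp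
    then show "(i * s) mod n \<in> Tset 1 2 (2*h+1)" unfolding im(1) using im(2,3) n3 by (intro memT) simp_all
  next
    case False
    then obtain k where k: "i = 2*k + 1" using oddE by blast
    show "(i * s) mod n \<in> Tset 1 2 (2*h+1)"
    proof (cases "i \<le> H")
      case True
      obtain d where d: "H = i + d" using True le_Suc_ex by blast
      define y where "y = d*a + d"
      define x where "x = a*a + y"
      define z where "z = i*(1+a)"
      have e1: "i * s + z = k * n + N" unfolding z_def nN k using sN by (simp add: algebra_simps flip: sN)
      have e2: "x + z = N" unfolding x_def y_def z_def N_def d by (simp add: algebra_simps)
      have imx: "(i*s) mod n = x" by (rule i_mod2[OF e1 e2 Nn])
      have da: "d < a" using d aH by simp
      have ya: "y < a*a"
      proof -
        have "y = d*(a+1)" by (simp add: y_def algebra_simps)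
        also have "\<dots> \<le> H*(a+1)" using d by (intro mult_le_mono1) simp
        also have "\<dots> < a*a" using aH by (simp add: algebra_simps)
        finally show ?thesis .
      qed
      have wx: "w3 x = 1 + 2 * w3 d" using wa2[OF ya] wa_split[OF da, of d] by (simp add: x_def y_def)
      have "even d" using Hodd k d by presburger
      then have "w3 d mod 2 = 0" using w3_parity[of d] by simp
      then obtain u where u: "w3 d = 2*u" by auto
      have "w3 x mod 4 = 1" using wx u by simp
      moreover have "1 \<le> x" unfolding x_def using aa1 by linarith
      moreover have "x < n" using e2 Nn by linarith
      ultimately show ?thesis unfolding imx using n3 by (intro memT) simp_all
    next
      case False
      define t where "t = i - H"
      have it: "i = H + t" using False by (simp add: t_def)
      have t24: "t = 2 \<or> t = 4" using it k Hodd iL False by presburger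
      define b where "b = a - 1 - t"
      have ab: "a = b + t + 1" using t24 a27 unfolding b_def by linarith
      define x where "x = b*a + (a - t)"
      define z where "z = i*(1+a)"
      have e1: "i * s + z = k * n + N" unfolding z_def nN k using sN by (simp add: algebra_simps flip: sN)
      have e2: "x + z = N"
      proof -
        have "x = b*a + b + 1" using ab by (simp add: x_def)
        then show ?thesis unfolding z_def N_def it by (simp add: ab algebra_simps)
      qed
      have imx: "(i*s) mod n = x" by (rule i_mod2[OF e1 e2 Nn])
      have ta: "a - t < a" "t < a" "t - 1 < a" using t24 a27 by auto
      have wx: "w3 x = w3 b + w3 (a - t)" using wa_split[OF ta(1), of b] by (simp add: x_def)
      have wb: "w3 b = 2*h - w3 t" using wa_compl[OF ta(2)] by (simp add: b_def)
      have "a - t = a - 1 - (t - 1)" using t24 by linarith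
      then have wat: "w3 (a - t) = 2*h - w3 (t - 1)" using wa_compl[OF ta(3)] by simp
      have "w3 x = 4*(h - 1) + 1" using t24 wx wb wat w3_small h3 by auto
      then have "w3 x mod 4 = 1" by simp
      moreover have "1 \<le> x" "x < n" using e2 Nn ab by (simp_all add: x_def)
      ultimately show ?thesis unfolding imx using n3 by (intro memT) simp_all
    qed
  qed
qed


lemma caseB:
  assumes he: "even h" and i1: "1 \<le> i" and iL: "i \<le> H + 6"
  shows "(i * (2*H*H + a*a)) mod (3^(2*h+1) - 1) \<in> Tset 1 2 (2*h+1)"
proof -
  have Hev: "even H" using H_parity(2)[OF he] .
  have a9: "a \<ge> 9" by (rule a_ge9)
  then have H4: "H \<ge> 4" using aH by simp
  obtain v where hv: "h = 2*v" using he by (auto elim: evenE)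
  obtain G where G: "H = G + 2"
  proof -
    have "2 \<le> H" using H4 by simp
    then obtain G where "H = 2 + G" using le_Suc_ex by blast
    then show ?thesis using that by simp
  qed
  have aG: "a = 2*G + 5" using aH G by simp
  have aa1: "1 \<le> a*a" using a9 by (simp add: Suc_le_eq)
  define N where "N = H*(1+a) + a*a"
  define n where "n = (3::nat)^(2*h+1) - 1"
  define s where "s = 2*H*H + a*a"
  have nN: "n = 2*N" unfolding n_def N_def by (rule n_eq)
  have sN: "s + 2*H = N" unfolding s_def N_def aH by (simp add: algebra_simps)
  have Nn: "N < n" using nN aa1 by (simp add: N_def)
  have n3: "n = 3^(2*h+1) - 1" by (simp add: n_def)
  show ?thesis unfolding s_def[symmetric] n3[symmetric]
  proof (cases "even i")
    case True
    then obtain k where k: "i = 2*k" by (auto elim: evenE)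
    have k1: "k \<ge> 1" using i1 k by simp
    define z where "z = 2*i*H"
    have e1: "i * s + z = k * n" unfolding z_def nN k using sN by (simp add: algebra_simps flip: sN)
    have z1: "1 \<le> z" using i1 H4 by (simp add: z_def)
    have zn: "z < n"
    proof -
      have "z \<le> 2*(H+6)*H" unfolding z_def using iL by (intro mult_le_mono1) simp
      also have "\<dots> < 2*N" unfolding N_def aG G by (simp add: algebra_simps)
      finally show ?thesis using nN by simp
    qed
    note im = i_mod[OF e1 k1 z1 zn]
    have "z < 3^(2*h+1)" using zn by (simp add: n_def)
    from wn_compl[OF this] have wx: "w3 (n - z) + w3 z = 2*(2*h+1)" by (simp add: n_def)
    show "(i * s) mod n \<in> Tset 1 2 (2*h+1)"
    proof (cases "i \<le> a")
      case True
      obtain j where j: "i = j + 1" using i1 by (cases i) auto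
      have ja: "j < a" using True j by simp
      have zdec: "z = j*a + (a - 1 - j)"
      proof -
        have "j + 1 \<le> a" using ja by simp
        then obtain e where e: "a = j + 1 + e" using le_Suc_ex by blast
        have "a - 1 - j = e" using e by simp
        moreover have "z = j*a + e"
        proof -
          have "2*H = j + e" using aH e by simp
          then have "z = (j+1)*(j+e)" unfolding z_def j by (metis mult.assoc mult.commute)
          then show ?thesis using e by (simp add: algebra_simps)
        qed
        ultimately show ?thesis by simp
      qed
      have "a - 1 - j < a" using ja by simp
      then have "w3 z = w3 j + w3 (a - 1 - j)" unfolding zdec by (rule wa_split)
      also have "\<dots> = 2*h" using w3_compl[of j h] ja a by simp
      finally have wz: "w3 z = 2*h" .
      have eqv: "w3 (n - z) = 4*v + 2" using wx wz hv by simp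
      have "w3 (n - z) mod 4 = 2" unfolding eqv by (rule m4) simp
      then show ?thesis unfolding im(1) using im(2,3) n3 by (intro memT) simp_all
    next
      case False
      have h2': "h = 2"
      proof (rule ccontr)
        assume "h \<noteq> 2"
        then have "h \<ge> 4" using h2 he by presburger
        then have "(3::nat)^4 \<le> 3^h" by (intro power_increasing) simp_all
        then have "a \<ge> 81" using a by simp
        then show False using False iL aH by simp
      qed
      then have a9': "a = 9" using a by simp
      then have H4': "H = 4" using aH by simp
      have i10: "i = 10" using False iL a9' H4' by simp
      have "(i * s) mod n = 162" unfolding i10 s_def n_def H4' a9' h2' by simp
      moreover have "w3 162 = 2" using w3_split[of 0 4 2] w3_small by simp
      ultimately show ?thesis using n3 h2' by (intro memT) simp_all
    qed
  next
    case False
    then obtain k where k: "i = 2*k + 1" using oddE by blast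
    define z where "z = 2*i*H"
    have e1: "i * s + z = k * n + N" unfolding z_def nN k using sN by (simp add: algebra_simps flip: sN)
    show "(i * s) mod n \<in> Tset 1 2 (2*h+1)"
    proof (cases "i \<le> H")
      case True
      obtain d where d: "H = i + d" using True le_Suc_ex by blast
      define y where "y = d*a + (H + i)"
      define x where "x = a*a + y"
      have e2: "x + z = N" unfolding x_def y_def z_def N_def using aH d by (simp add: algebra_simps)
      have imx: "(i*s) mod n = x" by (rule i_mod2[OF e1 e2 Nn])
      have da: "d < a" using d aH by simp
      have Hia: "H + i = a - 1 - d" using d aH by simp
      have Hia': "H + i < a" using Hia da by simp
      have ya: "y < a*a"
      proof -
        have "y < d*a + a" using Hia' by (simp add: y_def)
        also have "\<dots> = (d+1)*a" by simp
        also have "\<dots> \<le> a*a" using da by (intro mult_le_mono1) simp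
        finally show ?thesis .
      qed
      have "w3 x = 1 + (w3 d + w3 (a - 1 - d))"
        using wa2[OF ya] wa_split[OF Hia', of d] Hia by (simp add: x_def y_def)
      also have "\<dots> = 1 + 2*h" using w3_compl[of d h] da a by simp
      finally have eqv: "w3 x = 4*v + 1" using hv by simp
      have "w3 x mod 4 = 1" unfolding eqv by (rule m4) simp
      moreover have "1 \<le> x" unfolding x_def using aa1 by linarith
      moreover have "x < n" using e2 Nn by linarith
      ultimately show ?thesis unfolding imx using n3 by (intro memT) simp_all
    next
      case False
      define t where "t = i - H - 1"
      have it: "i = H + 1 + t" using False by (simp add: t_def)
      have t024: "t = 0 \<or> t = 2 \<or> t = 4" using it k Hev iL False by presburger
      have cases: "\<exists>x. x + z = N \<and> 1 \<le> x \<and> w3 x mod 4 = 1"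
      proof -
        have zG: "z = 2*(G + 3 + t)*(G+2)" unfolding z_def it G by (simp add: algebra_simps)
        have NG: "N = (G+2)*(2*G+6) + (2*G+5)*(2*G+5)" unfolding N_def G aG by simp
        have w1: "w3 (a - 1 - 1) = 2*h - 1" using wa_compl[of 1] a9 w3_small by simp
        have w4: "w3 (a - 1 - 3) = 2*h - 1" using wa_compl[of 3] a9 w3_small by simp
        consider "t = 0" | "t = 2" | "t = 4" using t024 by blast
        then show ?thesis
        proof cases
          case 1
          have "a*a + z = N" unfolding zG NG 1 aG by (simp add: algebra_simps)
          moreover have "w3 (a*a) = 1" using wa2[of 0] aa1 by simp
          ultimately show ?thesis using aa1 by auto
        next
          case 2
          define x where "x = (a - 2)*a + 2"
          have xG: "x = (2*G+3)*(2*G+5) + 2" unfolding x_def aG by simp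
          have "x + z = N" unfolding zG NG 2 xG by (simp add: algebra_simps)
          moreover have "w3 x = 4*v + 1"
          proof -
            have "w3 x = w3 (a - 2) + w3 2" unfolding x_def using a9 by (intro wa_split) simp
            also have "a - 2 = a - 1 - 1" by simp
            finally show ?thesis using w1 w3_small hv h2 by simp
          qed
          moreover have "1 \<le> x" by (simp add: x_def)
          ultimately show ?thesis using m4[of 1 v] by auto
        next
          case 3
          define x where "x = (a - 4)*a + 4"
          have xG: "x = (2*G+1)*(2*G+5) + 4" unfolding x_def aG by simp
          have "x + z = N" unfolding zG NG 3 xG by (simp add: algebra_simps)
          moreover have "w3 x = 4*v + 1"
          proof -
            have "w3 x = w3 (a - 4) + w3 4" unfolding x_def using a9 by (intro wa_split) simp
            also have "a - 4 = a - 1 - 3" by simp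
            finally show ?thesis using w4 w3_small hv h2 by simp
          qed
          moreover have "1 \<le> x" by (simp add: x_def)
          ultimately show ?thesis using m4[of 1 v] by auto
        qed
      qed
      then obtain x where e2: "x + z = N" and x1: "1 \<le> x" and wxx: "w3 x mod 4 = 1" by blast
      have imx: "(i*s) mod n = x" by (rule i_mod2[OF e1 e2 Nn])
      have "x < n" using e2 Nn by linarith
      then show ?thesis unfolding imx using n3 x1 wxx by (intro memT) simp_all
    qed
  qed
qed

end

lemma inj_mult:
  fixes s v K n :: nat
  assumes sv: "s*v = 1 + K*n"
  shows "inj_on (\<lambda>x. (s*x) mod n) {..<n}"
proof (rule inj_onI)
  fix x y assume x: "x \<in> {..<n}" and y: "y \<in> {..<n}" and e: "(s*x) mod n = (s*y) mod n"
  have f: "(v*(s*z)) mod n = z mod n" for z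
  proof -
    have "v*(s*z) = (s*v)*z" by (simp add: mult_ac)
    also have "\<dots> = z + (K*z)*n" unfolding sv by (simp add: algebra_simps)
    finally have "v*(s*z) = z + (K*z)*n" .
    then show ?thesis by simp
  qed
  have "(v*(s*x)) mod n = (v*((s*x) mod n)) mod n" by (simp add: mod_mult_right_eq)
  also have "\<dots> = (v*((s*y) mod n)) mod n" using e by simp
  also have "\<dots> = (v*(s*y)) mod n" by (simp add: mod_mult_right_eq)
  finally have "x mod n = y mod n" using f by simp
  then show "x = y" using x y by simp
qed

lemma min_dist_gt:
  assumes fin: "finite C" and c0: "c0 \<in> C" "c0 \<noteq> 0"
      and all: "\<And>c. c \<in> C \<Longrightarrow> c \<noteq> 0 \<Longrightarrow> L < hweight c"
  shows "L < min_dist C"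
proof -
  have fW: "finite {hweight c | c. c \<in> C \<and> c \<noteq> 0}" using fin by simp
  have nW: "{hweight c | c. c \<in> C \<and> c \<noteq> 0} \<noteq> {}" using c0 by blast
  show ?thesis unfolding min_dist_def using Min_gr_iff[OF fW nW] all by blast
qed

context
  fixes \<alpha> :: "'a::{field,finite}" and m :: nat
  assumes card: "card (UNIV::'a set) = 3^m" and prim: "primitive_elem \<alpha>" and m1: "m \<ge> 1"
begin

lemma dist_bound:
  fixes s v K L :: nat
  assumes sv: "s*v = 1 + K*(3^m - 1)"
      and run: "\<And>i. 1 \<le> i \<Longrightarrow> i \<le> L \<Longrightarrow> (i*s) mod (3^m - 1) \<in> Tset 1 2 m"
  shows "L < min_dist (tcode \<alpha> 1 2 m)"
proof -
  define n where "n = (3::nat)^m - 1"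
  define \<beta> where "\<beta> = \<alpha>^s"
  note c3 = c3[OF card prim m1]
  have anz: "\<alpha> \<noteq> 0" by (rule alpha_nz[OF card prim m1])
  have bnz: "\<beta> \<noteq> 0" using anz by (simp add: \<beta>_def)
  have inj: "inj_on (\<lambda>k. \<beta>^k) {..<n}"
  proof (rule inj_onI)
    fix x y assume x: "x \<in> {..<n}" and y: "y \<in> {..<n}" and e: "\<beta>^x = \<beta>^y"
    then have "\<alpha>^(s*x) = \<alpha>^(s*y)" by (simp add: \<beta>_def power_mult)
    then have "(s*x) mod n = (s*y) mod n" using alpha_eq[OF card prim m1] by (simp add: n_def)
    then show "x = y" using inj_mult[OF sv] x y by (auto simp: n_def dest: inj_onD)
  qed
  have fin: "finite (tcode \<alpha> 1 2 m)"
  proof (rule ccontr)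
    assume "infinite (tcode \<alpha> 1 2 m)"
    then have "card (tcode \<alpha> 1 2 m) = 0" by simp
    then show False using tcode_card[OF card prim m1] by simp
  qed
  have g_in: "gpoly \<alpha> 1 2 m \<in> tcode \<alpha> 1 2 m"
  proof -
    have "\<forall>i. cf (gpoly \<alpha> 1 2 m) i \<in> prime_subfield"
      using gpoly_fr[OF card prim m1, of 1 2] fr_id_iff[OF c3] by blast
    moreover have "degree (gpoly \<alpha> 1 2 m) < 3^m - 1"
      using gpoly_degree[OF card prim m1] card_T_lt[OF m1] by simp
    ultimately show ?thesis by (simp add: tcode_def)
  qed
  have gnz: "gpoly \<alpha> 1 2 m \<noteq> 0" by (rule gpoly_nz[OF card prim m1])
  show ?thesis
  proof (rule min_dist_gt[OF fin g_in gnz])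
    fix c assume c: "c \<in> tcode \<alpha> 1 2 m" and cnz: "c \<noteq> 0"
    have deg: "degree c < n" and gc: "gpoly \<alpha> 1 2 m dvd c" using c by (auto simp: tcode_def n_def)
    have zeros: "poly c (\<beta>^i) = 0" if "1 \<le> i" "i \<le> L" for i
    proof -
      have "\<beta>^i = \<alpha>^(i*s)" by (simp add: \<beta>_def power_mult[symmetric] mult.commute)
      also have "\<dots> = \<alpha>^((i*s) mod (3^m - 1))" by (rule alpha_mod[OF card prim m1])
      finally have bi: "\<beta>^i = \<alpha>^((i*s) mod (3^m - 1))" .
      have "poly (gpoly \<alpha> 1 2 m) (\<beta>^i) = 0" unfolding bi using run[OF that]
        by (rule gpoly_root[OF card prim m1])
      then show ?thesis using gc by (auto elim: dvdE)
    qed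
    show "L < hweight c" by (rule bch[OF inj deg zeros cnz bnz])
  qed
qed

end

lemma sv_B: "H = 2*r \<Longrightarrow> a = 2*H+1 \<Longrightarrow> (2*H*H + a*a) * (3*(H+1)) = 1 + (3*r+1)*(2*(H*(1+a) + a*a::nat))"
  by (simp add: algebra_simps)

lemma sv_A: "H = 2*r+1 \<Longrightarrow> a = 2*H+1 \<Longrightarrow> ((H - 1)*(1+a) + a*a) * (3*H) = 1 + (3*r+1)*(2*(H*(1+a) + a*a::nat))"
  by (simp add: algebra_simps)

theorem theorem4:
  fixes \<alpha> :: "'a::{field,finite}" and m :: nat
  assumes card: "card (UNIV :: 'a set) = 3 ^ m"
    and prim: "primitive_elem \<alpha>"
    and odd: "odd m" and m5: "m \<ge> 5"
  shows "(m mod 4 = 1 \<longrightarrow>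
            real (min_dist (tcode \<alpha> 1 2 m)) \<ge> (3 ^ ((m - 1) div 2) + 13) / 2
          \<and> dim3 (tcode \<alpha> 1 2 m) = (3 ^ m - 1) div 2)
       \<and> (m mod 4 = 3 \<longrightarrow>
            real (min_dist (tcode \<alpha> 1 2 m)) \<ge> (3 ^ ((m - 1) div 2) + 11) / 2
          \<and> dim3 (tcode \<alpha> 1 2 m) = ((3 ^ m - 1) + 2) div 2)"
proof -
  have m1: "m \<ge> 1" using m5 by simp
  define h where "h = (m - 1) div 2"
  obtain k where k: "m = 2*k + 1" using odd by (auto elim: oddE)
  then have "h = k" unfolding h_def by simp
  then have mh: "m = 2*h + 1" using k by simp
  have h2: "h \<ge> 2" using m5 mh by simp
  define a where "a = (3::nat)^h"
  define H where "H = a div 2"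
  have "odd a" by (simp add: a_def)
  then have aH: "a = 2*H + 1" unfolding H_def by simp
  have ra: "(3::real)^((m-1) div 2) = 2 * real H + 1"
  proof -
    have "(3::real)^((m-1) div 2) = real a" by (simp add: a_def h_def)
    then show ?thesis using aH by simp
  qed
  have dimT: "dim3 (tcode \<alpha> 1 2 m) = (3^m - 1) - card (Tset 1 2 m)" by (rule tcode_dim[OF card prim m1])
  have n_eq': "(3::nat)^m - 1 = 2*(H*(1+a) + a*a)" unfolding mh by (rule n_eq[OF a_def aH h2])
  show ?thesis
  proof (intro conjI impI)
    assume m4: "m mod 4 = 1"
    have cT: "2 * int (card (Tset 1 2 m)) = 3^m - 1" by (rule cardT(1)[OF odd m4])
    have "3^m \<ge> (1::nat)" by simp
    then have "int (2 * card (Tset 1 2 m)) = int (3^m - 1)" using cT by (simp add: of_nat_diff)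
    then have "2 * card (Tset 1 2 m) = 3^m - 1" by (simp only: of_nat_eq_iff)
    then show "dim3 (tcode \<alpha> 1 2 m) = (3^m - 1) div 2" unfolding dimT by linarith
    have he: "even h" using m4 mh by presburger
    then have Hev: "even H" by (rule H_parity(2)[OF a_def aH h2])
    then obtain r where r: "H = 2*r" by (auto elim: evenE)
    have sv: "(2*H*H + a*a) * (3*(H+1)) = 1 + (3*r+1)*(3^m - 1)"
      unfolding n_eq' by (rule sv_B[OF r aH])
    have run: "(i*(2*H*H + a*a)) mod (3^m - 1) \<in> Tset 1 2 m" if "1 \<le> i" "i \<le> H + 6" for i
      using caseB[OF a_def aH h2 he that] mh by simp
    have "H + 6 < min_dist (tcode \<alpha> 1 2 m)" by (rule dist_bound[OF card prim m1 sv run])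
    then have "real (H + 7) \<le> real (min_dist (tcode \<alpha> 1 2 m))" by linarith
    then show "real (min_dist (tcode \<alpha> 1 2 m)) \<ge> (3 ^ ((m - 1) div 2) + 13) / 2" unfolding ra by simp
  next
    assume m4: "m mod 4 = 3"
    have cT: "2 * int (card (Tset 1 2 m)) = 3^m - 3" by (rule cardT(2)[OF odd m4])
    have "3^m \<ge> (3::nat)" using m1 by (metis power_one_right power_increasing zero_less_numeral one_le_numeral)
    then have "int (2 * card (Tset 1 2 m)) = int (3^m - 3)" using cT by (simp add: of_nat_diff)
    then have "2 * card (Tset 1 2 m) = 3^m - 3" by (simp only: of_nat_eq_iff)
    then show "dim3 (tcode \<alpha> 1 2 m) = ((3^m - 1) + 2) div 2" unfolding dimT using \<open>3^m \<ge> 3\<close> by linarith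
    have ho: "odd h" using m4 mh by presburger
    then have Hodd: "odd H" by (rule H_parity(1)[OF a_def aH h2])
    then obtain r where r: "H = 2*r + 1" by (auto elim: oddE)
    have sv: "((H - 1)*(1+a) + a*a) * (3*H) = 1 + (3*r+1)*(3^m - 1)"
      unfolding n_eq' by (rule sv_A[OF r aH])
    have run: "(i*((H - 1)*(1+a) + a*a)) mod (3^m - 1) \<in> Tset 1 2 m" if "1 \<le> i" "i \<le> H + 5" for i
      using caseA[OF a_def aH h2 ho that] mh by simp
    have "H + 5 < min_dist (tcode \<alpha> 1 2 m)" by (rule dist_bound[OF card prim m1 sv run])
    then have "real (H + 6) \<le> real (min_dist (tcode \<alpha> 1 2 m))" by linarith
    then show "real (min_dist (tcode \<alpha> 1 2 m)) \<ge> (3 ^ ((m - 1) div 2) + 11) / 2" unfolding ra by simp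
  qed
qed


end
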